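(* Assume the $\mathrm{CH}$. Then the forcing notion $\mathbb{P}$ satisfies the $\aleph_2$-chain condition.
   Context: Fix a well-ordering $\lhd$ of $H(\omega_2)$. "$M \prec H(\omega_2)$" means $\langle M,\in,\lhd\cap M^2\rangle$ is an elementary substructure of $\langle H(\omega_2),\in,\lhd\rangle$. Let $\mathcal{S} = \{M \in [H(\omega_2)]^{\aleph_0} : M \prec H(\omega_2)\}$. For $M,N \in \mathcal{S}$ write $M \cong N$ if $\langle M,\in\rangle \cong \langle N,\in\rangle$, and let $\varphi_{M,N}: M \to N$ be the unique isomorphism. Put $\delta_M = M\cap\omega_1$; for $p \subseteq \mathcal{S}$, $dom(p) = \{\delta_M : M \in p\}$ and $p(\delta) = \{M \in p : \delta_M = \delta\}$. The forcing $\mathbb{P}^M_{\in}$ consists of finite $p \subseteq \mathcal{S}$ such that (a) if $M,N \in p$ and $\delta_M = \delta_N$ then $M \cong N$; (b) if $M \in p$, $\delta \in dom(p)$ and $\delta_M < \delta$, then there is $N \in p(\delta)$ with $M \in N$; ordered by reverse inclusion. The forcing $\mathbb{P}$ consists of pairs $p = \langle \mathcal{M}_p, f_p\rangle$ with $\mathcal{M}_p \in \mathbb{P}^M_{\in}$, $f_p$ a finite partial function from $\omega_2$ to $2$, and such that whenever $M,N \in \mathcal{M}_p$ with $\delta_M = \delta_N$ and $\alpha \in dom(f_p) \cap M$, then $\varphi_{M,N}(\alpha) \in dom(f_p)$ and $f_p(\varphi_{M,N}(\alpha)) = f_p(\alpha)$. Order: $p \le q$ iff $\mathcal{M}_q \subseteq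 \mathcal{M}_p$ and $f_q \subseteq f_p$. *)

theory Defs
  imports Main "HOL-Library.Countable_Set"
begin

definition at_most_aleph1 :: "'a set \<Rightarrow> bool" where
  "at_most_aleph1 A \<longleftrightarrow> (card_of A, cardSuc natLeq) \<in> ordLeq"

definition CH :: bool where
  "CH \<longleftrightarrow> (card_of (UNIV :: nat set set), cardSuc natLeq) \<in> ordIso"

text \<open>The structure (UNIV, E) where E x y means "x is an element of y".
  A membership structure is isomorphic to (H(omega_2), \<in>) iff it is well-founded,
  extensional, every element has at most aleph_1 members, and every subset of size
  at most aleph_1 is the extension of some element (Mostowski collapse).\<close>

definition ext :: "('h \<Rightarrow> 'h \<Rightarrow> bool) \<Rightarrow> 'h \<Rightarrow> 'h set" where
  "ext E x = {y. E y x}"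

definition is_H_omega2 :: "('h \<Rightarrow> 'h \<Rightarrow> bool) \<Rightarrow> bool" where
  "is_H_omega2 E \<longleftrightarrow>
     wfP E
   \<and> (\<forall>x y. ext E x = ext E y \<longrightarrow> x = y)
   \<and> (\<forall>x. at_most_aleph1 (ext E x))
   \<and> (\<forall>S. at_most_aleph1 S \<longrightarrow> (\<exists>x. ext E x = S))"

definition is_Ord :: "('h \<Rightarrow> 'h \<Rightarrow> bool) \<Rightarrow> 'h \<Rightarrow> bool" where
  "is_Ord E x \<longleftrightarrow>
     (\<forall>y\<in>ext E x. ext E y \<subseteq> ext E x)
   \<and> (\<forall>y\<in>ext E x. \<forall>z\<in>ext E x. E y z \<or> y = z \<or> E z y)"

definition omega2 :: "('h \<Rightarrow> 'h \<Rightarrow> bool) \<Rightarrow> 'h set" where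
  "omega2 E = {x. is_Ord E x}"

definition omega1 :: "('h \<Rightarrow> 'h \<Rightarrow> bool) \<Rightarrow> 'h set" where
  "omega1 E = {x. is_Ord E x \<and> countable (ext E x)}"

datatype fm =
    FMem nat nat
  | FLt nat nat
  | FEq nat nat
  | FNeg fm
  | FConj fm fm
  | FEx nat fm

fun sat :: "'h set \<Rightarrow> ('h \<Rightarrow> 'h \<Rightarrow> bool) \<Rightarrow> ('h \<times> 'h) set \<Rightarrow> fm \<Rightarrow> (nat \<Rightarrow> 'h) \<Rightarrow> bool" where
  "sat D E W (FMem i j) s = E (s i) (s j)"
| "sat D E W (FLt i j) s = ((s i, s j) \<in> W)"
| "sat D E W (FEq i j) s = (s i = s j)"
| "sat D E W (FNeg \<phi>) s = (\<not> sat D E W \<phi> s)"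
| "sat D E W (FConj \<phi> \<psi>) s = (sat D E W \<phi> s \<and> sat D E W \<psi> s)"
| "sat D E W (FEx i \<phi>) s = (\<exists>a\<in>D. sat D E W \<phi> (s(i := a)))"

definition elem_sub :: "('h \<Rightarrow> 'h \<Rightarrow> bool) \<Rightarrow> ('h \<times> 'h) set \<Rightarrow> 'h set \<Rightarrow> bool" where
  "elem_sub E W M \<longleftrightarrow>
     (\<forall>\<phi> s. (\<forall>i. s i \<in> M) \<longrightarrow> (sat M E W \<phi> s \<longleftrightarrow> sat UNIV E W \<phi> s))"

definition SS :: "('h \<Rightarrow> 'h \<Rightarrow> bool) \<Rightarrow> ('h \<times> 'h) set \<Rightarrow> 'h set set" where
  "SS E W = {M. countable M \<and> infinite M \<and> elem_sub E W M}"

definition is_iso :: "('h \<Rightarrow> 'h \<Rightarrow> bool) \<Rightarrow> 'h set \<Rightarrow> 'h set \<Rightarrow> ('h \<Rightarrow> 'h) \<Rightarrow> bool" where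
  "is_iso E M N \<phi> \<longleftrightarrow> bij_betw \<phi> M N \<and> (\<forall>x\<in>M. \<forall>y\<in>M. E x y \<longleftrightarrow> E (\<phi> x) (\<phi> y))"

definition isomorphic :: "('h \<Rightarrow> 'h \<Rightarrow> bool) \<Rightarrow> 'h set \<Rightarrow> 'h set \<Rightarrow> bool" where
  "isomorphic E M N \<longleftrightarrow> (\<exists>\<phi>. is_iso E M N \<phi>)"

text \<open>The (unique) isomorphism phi_{M,N}, made unique outside M by the value undefined.\<close>

definition phi :: "('h \<Rightarrow> 'h \<Rightarrow> bool) \<Rightarrow> 'h set \<Rightarrow> 'h set \<Rightarrow> 'h \<Rightarrow> 'h" where
  "phi E M N = (THE \<phi>. is_iso E M N \<phi> \<and> (\<forall>x. x \<notin> M \<longrightarrow> \<phi> x = undefined))"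

text \<open>delta_M = M \<inter> omega_1, a countable ordinal; ordinals are compared by proper inclusion.\<close>

definition delta :: "('h \<Rightarrow> 'h \<Rightarrow> bool) \<Rightarrow> 'h set \<Rightarrow> 'h set" where
  "delta E M = M \<inter> omega1 E"

definition set_in :: "('h \<Rightarrow> 'h \<Rightarrow> bool) \<Rightarrow> 'h set \<Rightarrow> 'h set \<Rightarrow> bool" where
  "set_in E M N \<longleftrightarrow> (\<exists>x\<in>N. ext E x = M)"

definition P_Min :: "('h \<Rightarrow> 'h \<Rightarrow> bool) \<Rightarrow> ('h \<times> 'h) set \<Rightarrow> 'h set set set" where
  "P_Min E W = {p. finite p \<and> p \<subseteq> SS E W
     \<and> (\<forall>M\<in>p. \<forall>N\<in>p. delta E M = delta E N \<longrightarrow> isomorphic E M N)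
     \<and> (\<forall>M\<in>p. \<forall>N'\<in>p. delta E M \<subset> delta E N' \<longrightarrow>
          (\<exists>N\<in>p. delta E N = delta E N' \<and> set_in E M N))}"

type_synonym 'h cond = "'h set set \<times> ('h \<rightharpoonup> bool)"

definition PP :: "('h \<Rightarrow> 'h \<Rightarrow> bool) \<Rightarrow> ('h \<times> 'h) set \<Rightarrow> 'h cond set" where
  "PP E W = {(Mp, f). Mp \<in> P_Min E W
     \<and> finite (dom f) \<and> dom f \<subseteq> omega2 E
     \<and> (\<forall>M\<in>Mp. \<forall>N\<in>Mp. delta E M = delta E N \<longrightarrow>
          (\<forall>\<alpha>\<in>dom f \<inter> M. phi E M N \<alpha> \<in> dom f \<and> f (phi E M N \<alpha>) = f \<alpha>))}"

definition PP_le :: "'h cond \<Rightarrow> 'h cond \<Rightarrow> bool" where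
  "PP_le p q \<longleftrightarrow> fst q \<subseteq> fst p \<and> snd q \<subseteq>\<^sub>m snd p"

definition compatible :: "'c set \<Rightarrow> ('c \<Rightarrow> 'c \<Rightarrow> bool) \<Rightarrow> 'c \<Rightarrow> 'c \<Rightarrow> bool" where
  "compatible P le p q \<longleftrightarrow> (\<exists>r\<in>P. le r p \<and> le r q)"

definition antichain :: "'c set \<Rightarrow> ('c \<Rightarrow> 'c \<Rightarrow> bool) \<Rightarrow> 'c set \<Rightarrow> bool" where
  "antichain P le A \<longleftrightarrow> A \<subseteq> P \<and> (\<forall>p\<in>A. \<forall>q\<in>A. p \<noteq> q \<longrightarrow> \<not> compatible P le p q)"

text \<open>aleph_2-c.c.: every antichain has size < aleph_2, i.e. at most aleph_1.\<close>

definition aleph2_cc :: "'c set \<Rightarrow> ('c \<Rightarrow> 'c \<Rightarrow> bool) \<Rightarrow> bool" where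
  "aleph2_cc P le \<longleftrightarrow> (\<forall>A. antichain P le A \<longrightarrow> at_most_aleph1 A)"

end

theory Submission
  imports Defs "HOL-Library.Countable_Set_Type"
begin

unbundle cardinal_syntax

abbreviation "k1 \<equiv> cardSuc natLeq"




lemma k1_Card: "Card_order k1"
  by (simp add: cardSuc_Card_order natLeq_Card_order)

lemma k1_inf: "\<not> finite (Field k1)"
  using Cinfinite_cardSuc natLeq_Cinfinite unfolding cinfinite_def by blast

lemma natLeq_le_k1: "natLeq \<le>o k1"
  by (simp add: cardSuc_ordLeq natLeq_Card_order)

lemma countable_le_k1: "countable A \<Longrightarrow> |A| \<le>o k1"
proof -
  assume "countable A"
  then have "|A| \<le>o |UNIV :: nat set|" by (simp add: countable_card_of_nat)
  also have "|UNIV :: nat set| =o natLeq" by (rule card_of_nat)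
  finally show ?thesis using natLeq_le_k1 ordLeq_transitive by blast
qed

lemma inj_le: "inj_on f A \<Longrightarrow> f ` A \<subseteq> B \<Longrightarrow> |A| \<le>o |B|"
  by (rule iffD1[OF card_of_ordLeq]) blast

lemma pow_countable_le: "|UNIV :: ('c::countable) set set| \<le>o |UNIV :: nat set set|"
proof -
  have "inj_on (\<lambda>S. to_nat ` S) (UNIV :: 'c set set)"
    by (intro inj_onI) (simp add: inj_image_eq_iff)
  from inj_le[OF this subset_UNIV] show ?thesis .
qed

lemma countable_sets_le: "|{T :: nat set set. countable T}| \<le>o |UNIV :: nat set set|"
proof -
  define code :: "nat set set \<Rightarrow> nat set" where
    "code T = (if T = {} then {0} else Suc ` {prod_encode (n, m) | n m. m \<in> from_nat_into T n})" for T
  have "inj_on code {T. countable T}"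
  proof (intro inj_onI)
    fix S T assume S: "S \<in> {T. countable T}" and T: "T \<in> {T. countable T}" and eq: "code S = code T"
    show "S = T"
    proof (cases "S = {}")
      case True
      then show ?thesis using eq unfolding code_def by (cases "T = {}") auto
    next
      case False
      then have TN: "T \<noteq> {}" using eq unfolding code_def by (cases "T = {}") auto
      then have H: "{prod_encode (n, m) | n m. m \<in> from_nat_into S n} = {prod_encode (n, m) | n m. m \<in> from_nat_into T n}"
        using eq False unfolding code_def by (simp add: inj_image_eq_iff)
      have "\<forall>n. from_nat_into S n = from_nat_into T n"
      proof (intro allI set_eqI iffI)
        fix n m
        { assume "m \<in> from_nat_into S n"
          then have "prod_encode (n,m) \<in> {prod_encode (n, m) | n m. m \<in> from_nat_into T n}" using H by blast
          then show "m \<in> from_nat_into T n" using prod_encode_eq by auto }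
        { assume "m \<in> from_nat_into T n"
          then have "prod_encode (n,m) \<in> {prod_encode (n, m) | n m. m \<in> from_nat_into S n}" using H by blast
          then show "m \<in> from_nat_into S n" using prod_encode_eq by auto }
      qed
      then have "range (from_nat_into S) = range (from_nat_into T)" by auto
      then show ?thesis using S T False TN by (simp add: range_from_nat_into)
    qed
  qed
  from inj_le[OF this subset_UNIV] show ?thesis .
qed

lemma le_k1_trans_iso: "|A| \<le>o |UNIV :: nat set set| \<Longrightarrow> |UNIV :: nat set set| =o k1 \<Longrightarrow> |A| \<le>o k1"
  using ordLeq_ordIso_trans by blast

lemma CS:
  assumes CH0: "|UNIV :: nat set set| =o k1" and U: "|U| \<le>o k1"
  shows "|{R. countable R \<and> R \<subseteq> U}| \<le>o k1"
proof -
  have "|U| \<le>o |UNIV :: nat set set|"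
    using U CH0 ordIso_symmetric ordLeq_ordIso_trans by blast
  then obtain j :: "_ \<Rightarrow> nat set" where j: "inj_on j U"
    using card_of_ordLeq[of U "UNIV :: nat set set"] by blast
  have "inj_on (\<lambda>R. j ` R) {R. countable R \<and> R \<subseteq> U}"
    by (intro inj_onI) (use j in \<open>auto simp: inj_on_image_eq_iff\<close>)
  moreover have "(\<lambda>R. j ` R) ` {R. countable R \<and> R \<subseteq> U} \<subseteq> {T. countable T}" by auto
  ultimately have "|{R. countable R \<and> R \<subseteq> U}| \<le>o |{T :: nat set set. countable T}|"
    by (rule inj_le)
  also note countable_sets_le
  also note CH0
  finally show ?thesis .
qed

lemma pow_countable_k1:
  assumes CH0: "|UNIV :: nat set set| =o k1"
  shows "|UNIV :: ('c::countable) set set| \<le>o k1"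
  using pow_countable_le CH0 ordLeq_ordIso_trans by blast

lemma UN_k1: "|I| \<le>o k1 \<Longrightarrow> (\<And>i. i \<in> I \<Longrightarrow> |A i| \<le>o k1) \<Longrightarrow> |\<Union>i\<in>I. A i| \<le>o k1"
  using card_of_UNION_ordLeq_infinite_Field[OF k1_inf k1_Card] by blast

lemma Un_k1: "|A| \<le>o k1 \<Longrightarrow> |B| \<le>o k1 \<Longrightarrow> |A \<union> B| \<le>o k1"
  using card_of_Un_ordLeq_infinite_Field[OF k1_inf] k1_Card by blast

lemma Times_k1: "|A| \<le>o k1 \<Longrightarrow> |B| \<le>o k1 \<Longrightarrow> |A \<times> B| \<le>o k1"
  using card_of_Times_ordLeq_infinite_Field[OF k1_inf] k1_Card by blast

lemma sub_k1: "A \<subseteq> B \<Longrightarrow> |B| \<le>o k1 \<Longrightarrow> |A| \<le>o k1"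
  using card_of_mono1 ordLeq_transitive by blast

lemma Field_k1: "|Field k1| \<le>o k1"
  using card_of_Field_ordIso[OF k1_Card] ordIso_iff_ordLeq by blast

lemma le_natLeq_countable: "|A| \<le>o natLeq \<Longrightarrow> countable A"
  unfolding countable_card_of_nat
  by (rule ordLeq_ordIso_trans[OF _ ordIso_symmetric[OF card_of_nat]])

lemma countable_le_natLeq: "countable A \<Longrightarrow> |A| \<le>o natLeq"
  unfolding countable_card_of_nat
  by (rule ordLeq_ordIso_trans[OF _ card_of_nat])

lemma less_k1_countable: "|A| <o k1 \<Longrightarrow> countable A"
  by (rule le_natLeq_countable, rule iffD1[OF cardSuc_ordLeq_ordLess[OF natLeq_Card_order card_of_Card_order]])

lemma natLeq_less_Field_k1: "natLeq <o |Field k1|"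
  by (rule ordLess_ordIso_trans[OF cardSuc_greater[OF natLeq_Card_order] ordIso_symmetric[OF card_of_Field_ordIso[OF k1_Card]]])

lemma k1_no_max:
  assumes "i \<in> Field k1"
  shows "\<exists>i'\<in>Field k1. i \<in> underS k1 i'"
proof (rule ccontr)
  assume H: "\<not> ?thesis"
  have "Field k1 \<subseteq> insert i (underS k1 i)"
  proof
    fix x assume x: "x \<in> Field k1"
    have "(x, i) \<in> k1 \<or> (i, x) \<in> k1"
      using wo_rel.TOTALS[OF Card_order_wo_rel[OF k1_Card]] x assms by blast
    then show "x \<in> insert i (underS k1 i)"
    proof
      assume "(x, i) \<in> k1" then show ?thesis unfolding underS_def by blast
    next
      assume xi: "(i, x) \<in> k1"
      show ?thesis
      proof (cases "x = i")
        case False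
        then have "i \<in> underS k1 x" using xi unfolding underS_def by blast
        then show ?thesis using H x by blast
      qed simp
    qed
  qed
  moreover have "countable (underS k1 i)"
    using card_of_underS[OF k1_Card assms] by (rule less_k1_countable)
  ultimately have "countable (Field k1)" by (meson countable_insert countable_subset)
  then have "|Field k1| \<le>o natLeq" by (rule countable_le_natLeq)
  then show False using not_ordLess_ordLeq[OF natLeq_less_Field_k1] by blast
qed

lemma closure_k1:
  fixes F :: "'a set \<Rightarrow> 'a set"
  assumes CH0: "|UNIV :: nat set set| =o k1" and Z0: "|Z0| \<le>o k1"
    and FR: "\<And>R. countable R \<Longrightarrow> |F R| \<le>o k1"
  shows "\<exists>Z. Z0 \<subseteq> Z \<and> |Z| \<le>o k1 \<and> (\<forall>R. countable R \<longrightarrow> R \<subseteq> Z \<longrightarrow> F R \<subseteq> Z)"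
proof -
  have WO: "wo_rel k1" by (rule Card_order_wo_rel[OF k1_Card])
  define H where "H = (\<lambda>(S :: _ \<Rightarrow> 'a set) k. Z0 \<union> (\<Union>R\<in>{R. countable R \<and> R \<subseteq> (\<Union>k'\<in>underS k1 k. S k')}. F R))"
  have adm: "wo_rel.adm_wo k1 H"
    unfolding wo_rel.adm_wo_def[OF WO] H_def by simp
  define S where "S = wo_rel.worec k1 H"
  have S_eq: "S k = H S k" for k
    unfolding S_def using wo_rel.worec_fixpoint[OF WO adm] by metis
  have mono: "S k \<subseteq> S k'" if "(k, k') \<in> k1" for k k'
  proof -
    have "underS k1 k \<subseteq> underS k1 k'"
      by (rule underS_incr[OF _ _ that]) (use WO in \<open>simp_all add: wo_rel_def well_order_on_def linear_order_on_def partial_order_on_def preorder_on_def\<close>)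
    then have "{R. countable R \<and> R \<subseteq> (\<Union>k'\<in>underS k1 k. S k')} \<subseteq> {R. countable R \<and> R \<subseteq> (\<Union>k''\<in>underS k1 k'. S k'')}"
      by blast
    then show ?thesis by (subst (1 2) S_eq) (unfold H_def, blast)
  qed
  define Z where "Z = (\<Union>k\<in>Field k1. S k)"
  have size: "|S k| \<le>o k1" for k
  proof (induction k rule: wo_rel.well_order_induct[OF WO])
    case (1 x)
    define U where "U = (\<Union>k'\<in>underS k1 x. S k')"
    have "|underS k1 x| \<le>o k1"
      by (rule sub_k1[OF _ Field_k1]) (auto intro: underS_Field)
    moreover have "\<And>k'. k' \<in> underS k1 x \<Longrightarrow> |S k'| \<le>o k1"
      using 1 unfolding underS_def by blast
    ultimately have "|U| \<le>o k1" unfolding U_def by (rule UN_k1)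
    then have "|{R. countable R \<and> R \<subseteq> U}| \<le>o k1" by (rule CS[OF CH0])
    then have "|\<Union>R\<in>{R. countable R \<and> R \<subseteq> U}. F R| \<le>o k1"
      by (rule UN_k1) (simp add: FR)
    then have "|H S x| \<le>o k1" unfolding H_def U_def[symmetric] using Z0 Un_k1 by simp
    then show ?case using S_eq by metis
  qed
  have "Field k1 \<noteq> {}" using k1_inf by auto
  then have "Z0 \<subseteq> Z" unfolding Z_def using S_eq[unfolded H_def] by blast
  moreover have "|Z| \<le>o k1" unfolding Z_def by (rule UN_k1[OF Field_k1 size])
  moreover have "F R \<subseteq> Z" if R: "countable R" "R \<subseteq> Z" for R
  proof -
    have chain: "relChain k1 S" unfolding relChain_def using mono by blast
    have "|R| \<le>o natLeq" using R(1) by (rule countable_le_natLeq)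
    then obtain i where i: "i \<in> Field k1" "R \<subseteq> S i"
      using cardSuc_UNION[OF natLeq_Card_order _ chain R(2)[unfolded Z_def]] natLeq_cinfinite
      unfolding cinfinite_def by blast
    obtain i' where i': "i' \<in> Field k1" "i \<in> underS k1 i'" using k1_no_max[OF i(1)] by blast
    have "R \<subseteq> (\<Union>k'\<in>underS k1 i'. S k')" using i i' by blast
    then have "F R \<subseteq> H S i'" unfolding H_def using R(1) by blast
    then show ?thesis using S_eq[of i'] i'(1) unfolding Z_def by blast
  qed
  ultimately show ?thesis by blast
qed



definition FIff :: "fm \<Rightarrow> fm \<Rightarrow> fm" where
  "FIff a b = FConj (FNeg (FConj a (FNeg b))) (FNeg (FConj b (FNeg a)))"

lemma sat_FIff[simp]: "sat D E W (FIff a b) s = (sat D E W a s \<longleftrightarrow> sat D E W b s)"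
  unfolding FIff_def by auto

lemma H_ext: "is_H_omega2 E \<Longrightarrow> ext E x = ext E y \<Longrightarrow> x = y"
  unfolding is_H_omega2_def by blast

lemma H_wf: "is_H_omega2 E \<Longrightarrow> wfP E"
  unfolding is_H_omega2_def by blast

lemma SS_ext:
  assumes H: "is_H_omega2 E" and M: "M \<in> SS E W" and x: "x \<in> M" and y: "y \<in> M"
    and eq: "\<forall>z\<in>M. E z x \<longleftrightarrow> E z y"
  shows "x = y"
proof (rule ccontr)
  assume ne: "x \<noteq> y"
  define \<phi> where "\<phi> = FEx 2 (FNeg (FIff (FMem 2 0) (FMem 2 1)))"
  define s where "s = (\<lambda>i::nat. if i = 0 then x else y)"
  have sM: "\<forall>i. s i \<in> M" using x y unfolding s_def by auto
  have "ext E x \<noteq> ext E y" using H_ext[OF H] ne by blast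
  then obtain z where "\<not> (E z x \<longleftrightarrow> E z y)" unfolding ext_def by blast
  then have "sat UNIV E W \<phi> s" unfolding \<phi>_def s_def by (auto intro!: bexI[of _ z])
  moreover have "elem_sub E W M" using M unfolding SS_def by blast
  ultimately have "sat M E W \<phi> s" using sM unfolding elem_sub_def by blast
  then obtain z where "z \<in> M" "\<not> (E z x \<longleftrightarrow> E z y)" unfolding \<phi>_def s_def by auto
  then show False using eq by blast
qed

lemma iso_unique:
  assumes H: "is_H_omega2 E" and M: "M \<in> SS E W" and N: "N \<in> SS E W"
    and i1: "is_iso E M N f" and i2: "is_iso E M N g"
  shows "\<forall>x\<in>M. f x = g x"
proof -
  have wf: "wfP E" by (rule H_wf[OF H])
  have "x \<in> M \<longrightarrow> f x = g x" for x
  proof (induction x rule: wfp_induct_rule[OF wf])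
    case (1 x)
    show ?case
    proof
      assume xM: "x \<in> M"
      have fxN: "f x \<in> N" and gxN: "g x \<in> N"
        using i1 i2 xM unfolding is_iso_def bij_betw_def by auto
      have "\<forall>z\<in>N. E z (f x) \<longleftrightarrow> E z (g x)"
      proof (intro ballI iffI)
        fix z assume zN: "z \<in> N" and z: "E z (f x)"
        obtain y where y: "y \<in> M" "z = f y" using zN i1 unfolding is_iso_def bij_betw_def by auto
        have "E y x" using i1 y xM z unfolding is_iso_def by blast
        then have "f y = g y" using 1 y(1) by blast
        then show "E z (g x)" using i2 y xM \<open>E y x\<close> unfolding is_iso_def by auto
      next
        fix z assume zN: "z \<in> N" and z: "E z (g x)"
        obtain y where y: "y \<in> M" "z = g y" using zN i2 unfolding is_iso_def bij_betw_def by auto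
        have "E y x" using i2 y xM z unfolding is_iso_def by blast
        then have "f y = g y" using 1 y(1) by blast
        then show "E z (f x)" using i1 y xM \<open>E y x\<close> unfolding is_iso_def by auto
      qed
      then show "f x = g x" using SS_ext[OF H N fxN gxN] by blast
    qed
  qed
  then show ?thesis by blast
qed

lemma phi_eq:
  assumes H: "is_H_omega2 E" and M: "M \<in> SS E W" and N: "N \<in> SS E W"
    and i: "is_iso E M N f" and x: "x \<in> M"
  shows "phi E M N x = f x"
proof -
  define f' where "f' = (\<lambda>y. if y \<in> M then f y else undefined)"
  have i': "is_iso E M N f'"
    using i unfolding is_iso_def f'_def bij_betw_def inj_on_def by auto
  have P: "is_iso E M N f' \<and> (\<forall>y. y \<notin> M \<longrightarrow> f' y = undefined)" using i' unfolding f'_def by auto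
  have U: "g = f'" if "is_iso E M N g \<and> (\<forall>y. y \<notin> M \<longrightarrow> g y = undefined)" for g
  proof
    fix y show "g y = f' y"
      using that iso_unique[OF H M N _ i'] P by (cases "y \<in> M") auto
  qed
  have "phi E M N = f'" unfolding phi_def using P U by (rule the_equality)
  then show ?thesis using x unfolding f'_def by simp
qed

lemma is_iso_comp:
  assumes "is_iso E M N f" "is_iso E N K g"
  shows "is_iso E M K (g \<circ> f)"
  using assms unfolding is_iso_def bij_betw_def inj_on_def by auto

lemma isomorphic_trans:
  "isomorphic E M N \<Longrightarrow> isomorphic E N K \<Longrightarrow> isomorphic E M K"
  unfolding isomorphic_def using is_iso_comp by blast



lemma wf_no2: "wfP E \<Longrightarrow> E a b \<Longrightarrow> E b a \<Longrightarrow> False"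
  using wfp_eq_minimal[of E] by (metis insertCI insertE singletonD)

lemma wf_no3: "wfP E \<Longrightarrow> E a b \<Longrightarrow> E b c \<Longrightarrow> E c a \<Longrightarrow> False"
proof -
  assume wf: "wfP E" and ab: "E a b" and bc: "E b c" and ca: "E c a"
  obtain z where z: "z \<in> {a, b, c}" "\<forall>y. E y z \<longrightarrow> y \<notin> {a, b, c}"
    using wf unfolding wfp_eq_minimal by (metis insertI1)
  then show False using ab bc ca by auto
qed

lemma Ord_elem:
  assumes wf: "wfP E" and x: "is_Ord E x" and yx: "E y x"
  shows "is_Ord E y"
proof -
  have yX: "y \<in> ext E x" using yx unfolding ext_def by simp
  have sub: "ext E y \<subseteq> ext E x" using x yX unfolding is_Ord_def by blast
  have "ext E z \<subseteq> ext E y" if z: "z \<in> ext E y" for z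
  proof
    fix w assume w: "w \<in> ext E z"
    have zX: "z \<in> ext E x" using sub z by blast
    have wX: "w \<in> ext E x" using x zX w unfolding is_Ord_def by blast
    have "E w y \<or> w = y \<or> E y w" using x wX yX unfolding is_Ord_def by blast
    moreover have "E z y" "E w z" using z w unfolding ext_def by auto
    ultimately have "E w y" using wf_no2[OF wf, of y z] wf_no3[OF wf, of y w z] by blast
    then show "w \<in> ext E y" unfolding ext_def by simp
  qed
  moreover have "\<forall>a\<in>ext E y. \<forall>b\<in>ext E y. E a b \<or> a = b \<or> E b a"
    using x sub unfolding is_Ord_def by blast
  ultimately show ?thesis unfolding is_Ord_def by blast
qed

lemma Ord_lin:
  assumes wf: "wfP E" and ex: "\<And>a b. ext E a = ext E b \<Longrightarrow> a = b"
  shows "is_Ord E x \<Longrightarrow> is_Ord E y \<Longrightarrow> E x y \<or> x = y \<or> E y x"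
proof (induction x arbitrary: y rule: wfp_induct_rule[OF wf])
  case (1 x)
  note outer = 1
  show ?case using outer(3)
  proof (induction y rule: wfp_induct_rule[OF wf])
    case (1 y)
    show ?case
    proof (rule ccontr)
      assume C: "\<not> (E x y \<or> x = y \<or> E y x)"
      have "ext E x = ext E y"
      proof (intro set_eqI iffI)
        fix z assume "z \<in> ext E x"
        then have zx: "E z x" unfolding ext_def by simp
        have zO: "is_Ord E z" by (rule Ord_elem[OF wf outer(2) zx])
        have "E z y \<or> z = y \<or> E y z" using outer(1)[OF zx zO 1(2)] .
        moreover have "E y z \<Longrightarrow> E y x"
          using outer(2) zx unfolding is_Ord_def ext_def by blast
        ultimately show "z \<in> ext E y" using C zx unfolding ext_def by blast
      next
        fix z assume "z \<in> ext E y"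
        then have zy: "E z y" unfolding ext_def by simp
        have zO: "is_Ord E z" by (rule Ord_elem[OF wf 1(2) zy])
        have "E x z \<or> x = z \<or> E z x" using 1(1)[OF zy zO] .
        moreover have "E x z \<Longrightarrow> E x y"
          using 1(2) zy unfolding is_Ord_def ext_def by blast
        ultimately show "z \<in> ext E x" using C zy unfolding ext_def by blast
      qed
      then show False using C ex by blast
    qed
  qed
qed

lemma omega1_le:
  assumes H: "is_H_omega2 E"
  shows "|omega1 E| \<le>o k1"
proof (rule ccontr)
  let ?O = "omega1 E"
  have wf: "wfP E" by (rule H_wf[OF H])
  assume "\<not> |?O| \<le>o k1"
  then have "k1 <o |?O|" using not_ordLeq_iff_ordLess k1_Card card_of_Card_order
    unfolding card_order_on_def by blast
  then have "|Field k1| \<le>o |?O|"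
    using ordIso_ordLess_trans[OF card_of_Field_ordIso[OF k1_Card]] ordLess_imp_ordLeq by blast
  then obtain j where j: "inj_on j (Field k1)" "j ` Field k1 \<subseteq> ?O"
    using card_of_ordLeq[of "Field k1" ?O] by blast
  define T where "T = j ` Field k1"
  have Tunc: "\<not> countable T"
  proof
    assume "countable T"
    then have "countable (Field k1)" unfolding T_def using j(1) countable_image_inj_on by blast
    then have "|Field k1| \<le>o natLeq" by (rule countable_le_natLeq)
    then show False using not_ordLess_ordLeq[OF natLeq_less_Field_k1] by blast
  qed
  have Tk: "|T| \<le>o k1" unfolding T_def using card_of_image ordLeq_transitive Field_k1 by blast
  define U where "U = T \<union> (\<Union>x\<in>T. ext E x)"
  have "\<And>x. x \<in> T \<Longrightarrow> |ext E x| \<le>o k1"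
    using j(2) unfolding T_def omega1_def by (auto intro: countable_le_k1)
  then have Uk: "|U| \<le>o k1" unfolding U_def by (intro Un_k1 Tk UN_k1)
  have "\<not> ?O \<subseteq> U"
  proof
    assume "?O \<subseteq> U"
    then have "|?O| \<le>o k1" using sub_k1 Uk by blast
    then show False using \<open>\<not> |?O| \<le>o k1\<close> by blast
  qed
  then obtain y where y: "y \<in> ?O" "y \<notin> U" by blast
  have "T \<subseteq> ext E y"
  proof
    fix x assume x: "x \<in> T"
    then have xO: "x \<in> ?O" using j(2) unfolding T_def by blast
    have "E x y \<or> x = y \<or> E y x"
      using Ord_lin[OF wf H_ext[OF H]] xO y(1) unfolding omega1_def by blast
    then show "x \<in> ext E y" using y(2) x unfolding U_def ext_def by auto
  qed
  moreover have "countable (ext E y)" using y(1) unfolding omega1_def by simp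
  ultimately show False using Tunc countable_subset by blast
qed



definition Xc :: "'h set set \<Rightarrow> ('h \<rightharpoonup> bool) \<Rightarrow> 'h set" where
  "Xc Mp fp = \<Union>Mp \<union> dom fp"

definition good_map where
  "good_map E Mp fp Mq fq \<psi> \<longleftrightarrow>
    (\<forall>x\<in>Xc Mp fp. \<psi> x \<in> Xc Mq fq) \<and> inj_on \<psi> (Xc Mp fp) \<and>
    (\<forall>x\<in>Xc Mp fp. \<forall>y\<in>Xc Mp fp. E x y \<longleftrightarrow> E (\<psi> x) (\<psi> y)) \<and>
    (\<forall>M\<in>Mp. \<psi> ` M \<in> Mq) \<and>
    (\<forall>x\<in>Xc Mp fp. fq (\<psi> x) = fp x) \<and>
    (\<forall>x\<in>Xc Mp fp \<inter> Xc Mq fq. \<psi> x = x) \<and>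
    (\<forall>x\<in>Xc Mp fp. x \<in> omega1 E \<longleftrightarrow> \<psi> x \<in> omega1 E) \<and>
    (\<forall>x\<in>Xc Mp fp \<inter> omega1 E. \<psi> x = x)"

lemma PP_D:
  assumes "(Mp, fp) \<in> PP E W"
  shows "finite Mp" "Mp \<subseteq> SS E W"
    "\<And>M N. M \<in> Mp \<Longrightarrow> N \<in> Mp \<Longrightarrow> delta E M = delta E N \<Longrightarrow> isomorphic E M N"
    "\<And>M N'. M \<in> Mp \<Longrightarrow> N' \<in> Mp \<Longrightarrow> delta E M \<subset> delta E N' \<Longrightarrow> \<exists>N\<in>Mp. delta E N = delta E N' \<and> set_in E M N"
    "finite (dom fp)" "dom fp \<subseteq> omega2 E"
    "\<And>M N \<alpha>. M \<in> Mp \<Longrightarrow> N \<in> Mp \<Longrightarrow> delta E M = delta E N \<Longrightarrow> \<alpha> \<in> dom fp \<Longrightarrow> \<alpha> \<in> M \<Longrightarrow>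
       phi E M N \<alpha> \<in> dom fp \<and> fp (phi E M N \<alpha>) = fp \<alpha>"
  using assms unfolding PP_def P_Min_def by auto

lemma M_sub: "M \<in> Mp \<Longrightarrow> M \<subseteq> Xc Mp fp"
  unfolding Xc_def by blast

lemma delta_map:
  assumes g1: "good_map E Mp fp Mq fq \<psi>" and M: "M \<in> Mp"
  shows "delta E (\<psi> ` M) = delta E M"
proof -
  have sub: "M \<subseteq> Xc Mp fp" using M_sub[OF M] .
  have o1: "\<forall>x\<in>Xc Mp fp. x \<in> omega1 E \<longleftrightarrow> \<psi> x \<in> omega1 E"
    and o2: "\<forall>x\<in>Xc Mp fp \<inter> omega1 E. \<psi> x = x" using g1 unfolding good_map_def by blast+
  show ?thesis unfolding delta_def
  proof (intro set_eqI iffI)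
    fix y assume "y \<in> \<psi> ` M \<inter> omega1 E"
    then obtain x where x: "x \<in> M" "y = \<psi> x" "\<psi> x \<in> omega1 E" by blast
    then have "x \<in> omega1 E" using o1 sub by blast
    then have "\<psi> x = x" using o2 sub x(1) by blast
    then show "y \<in> M \<inter> omega1 E" using x \<open>x \<in> omega1 E\<close> by simp
  next
    fix y assume y: "y \<in> M \<inter> omega1 E"
    then have "\<psi> y = y" using o2 sub by blast
    then show "y \<in> \<psi> ` M \<inter> omega1 E" using y by (metis IntD1 IntD2 IntI imageI)
  qed
qed

lemma iso_map:
  assumes g1: "good_map E Mp fp Mq fq \<psi>" and M: "M \<in> Mp"
  shows "is_iso E M (\<psi> ` M) \<psi>"
proof -
  have sub: "M \<subseteq> Xc Mp fp" using M_sub[OF M] .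
  have "inj_on \<psi> M" using g1 sub unfolding good_map_def using inj_on_subset by blast
  moreover have "\<forall>x\<in>M. \<forall>y\<in>M. E x y \<longleftrightarrow> E (\<psi> x) (\<psi> y)" using g1 sub unfolding good_map_def by blast
  ultimately show ?thesis unfolding is_iso_def bij_betw_def by blast
qed

lemma map_in: "good_map E Mp fp Mq fq \<psi> \<Longrightarrow> M \<in> Mp \<Longrightarrow> \<psi> ` M \<in> Mq"
  unfolding good_map_def by blast

context
  fixes E :: "'h \<Rightarrow> 'h \<Rightarrow> bool" and W Mp fp Mq fq \<psi> \<chi> f
  assumes H: "is_H_omega2 E"
    and p: "(Mp, fp) \<in> PP E W" and q: "(Mq, fq) \<in> PP E W"
    and g1: "good_map E Mp fp Mq fq \<psi>" and g2: "good_map E Mq fq Mp fp \<chi>"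
    and fdom: "dom f = dom fp \<union> dom fq"
    and fp: "\<forall>x\<in>dom fp. f x = fp x" and fq: "\<forall>x\<in>dom fq. f x = fq x"
begin

lemma dom_p:
  assumes a: "\<alpha> \<in> Xc Mp fp" "\<alpha> \<in> dom f"
  shows "\<alpha> \<in> dom fp"
proof (rule ccontr)
  assume n: "\<alpha> \<notin> dom fp"
  then have "\<alpha> \<in> dom fq" using a fdom by blast
  then have "\<alpha> \<in> Xc Mq fq" unfolding Xc_def by blast
  then have "\<psi> \<alpha> = \<alpha>" using g1 a unfolding good_map_def by blast
  then have "fq \<alpha> = fp \<alpha>" using g1 a unfolding good_map_def by metis
  then show False using n \<open>\<alpha> \<in> dom fq\<close> by (simp add: domIff)
qed

lemma half_a:
  assumes M: "M \<in> Mp" and N: "N \<in> Mp \<union> Mq" and d: "delta E M = delta E N"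
  shows "isomorphic E M N"
proof (cases "N \<in> Mp")
  case True then show ?thesis using PP_D(3)[OF p M _ d] by blast
next
  case False
  then have Nq: "N \<in> Mq" using N by blast
  have "isomorphic E (\<psi> ` M) N" using PP_D(3)[OF q map_in[OF g1 M] Nq] delta_map[OF g1 M] d by simp
  moreover have "isomorphic E M (\<psi> ` M)" using iso_map[OF g1 M] unfolding isomorphic_def by blast
  ultimately show ?thesis using isomorphic_trans by blast
qed

lemma half_b:
  assumes M: "M \<in> Mp" and N': "N' \<in> Mp \<union> Mq" and d: "delta E M \<subset> delta E N'"
  shows "\<exists>N\<in>Mp \<union> Mq. delta E N = delta E N' \<and> set_in E M N"
proof (cases "N' \<in> Mp")
  case True then show ?thesis using PP_D(4)[OF p M _ d] by blast
next
  case False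
  then have Nq: "N' \<in> Mq" using N' by blast
  have N2: "\<chi> ` N' \<in> Mp" by (rule map_in[OF g2 Nq])
  have "delta E (\<chi> ` N') = delta E N'" by (rule delta_map[OF g2 Nq])
  then show ?thesis using PP_D(4)[OF p M N2] d by auto
qed

lemma half_c:
  assumes M: "M \<in> Mp" and N: "N \<in> Mp \<union> Mq" and d: "delta E M = delta E N"
    and a: "\<alpha> \<in> dom f" "\<alpha> \<in> M"
  shows "phi E M N \<alpha> \<in> dom f \<and> f (phi E M N \<alpha>) = f \<alpha>"
proof -
  have aX: "\<alpha> \<in> Xc Mp fp" using M_sub[OF M] a(2) by blast
  have ap: "\<alpha> \<in> dom fp" by (rule dom_p[OF aX a(1)])
  show ?thesis
  proof (cases "N \<in> Mp")
    case True
    have "phi E M N \<alpha> \<in> dom fp \<and> fp (phi E M N \<alpha>) = fp \<alpha>" by (rule PP_D(7)[OF p M True d ap a(2)])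
    then show ?thesis using fp ap fdom by auto
  next
    case False
    then have Nq: "N \<in> Mq" using N by blast
    define M' where "M' = \<psi> ` M"
    have M'q: "M' \<in> Mq" unfolding M'_def by (rule map_in[OF g1 M])
    have d': "delta E M' = delta E N" unfolding M'_def using delta_map[OF g1 M] d by simp
    obtain \<phi>' where \<phi>': "is_iso E M' N \<phi>'" using PP_D(3)[OF q M'q Nq d'] unfolding isomorphic_def by blast
    have iM: "is_iso E M M' \<psi>" unfolding M'_def by (rule iso_map[OF g1 M])
    have SM: "M \<in> SS E W" using PP_D(2)[OF p] M by blast
    have SN: "N \<in> SS E W" using PP_D(2)[OF q] Nq by blast
    have SM': "M' \<in> SS E W" using PP_D(2)[OF q] M'q by blast
    have e1: "phi E M N \<alpha> = \<phi>' (\<psi> \<alpha>)"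
      using phi_eq[OF H SM SN is_iso_comp[OF iM \<phi>'] a(2)] by simp
    have pa: "\<psi> \<alpha> \<in> M'" unfolding M'_def using a(2) by blast
    have e2: "phi E M' N (\<psi> \<alpha>) = \<phi>' (\<psi> \<alpha>)" by (rule phi_eq[OF H SM' SN \<phi>' pa])
    have fpa: "fq (\<psi> \<alpha>) = fp \<alpha>" using g1 aX unfolding good_map_def by blast
    then have pq: "\<psi> \<alpha> \<in> dom fq" using ap by (simp add: domIff)
    have "phi E M' N (\<psi> \<alpha>) \<in> dom fq \<and> fq (phi E M' N (\<psi> \<alpha>)) = fq (\<psi> \<alpha>)"
      by (rule PP_D(7)[OF q M'q Nq d' pq pa])
    then show ?thesis using e1 e2 fpa fq fp ap fdom by auto
  qed
qed

end
lemma amalg: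
  assumes H: "is_H_omega2 E"
    and p: "(Mp, fp) \<in> PP E W" and q: "(Mq, fq) \<in> PP E W"
    and g1: "good_map E Mp fp Mq fq \<psi>" and g2: "good_map E Mq fq Mp fp \<chi>"
  shows "compatible (PP E W) PP_le (Mp, fp) (Mq, fq)"
proof -
  define f where "f = fp ++ fq"
  have agree: "fp x = fq x" if "x \<in> dom fp" "x \<in> dom fq" for x
  proof -
    have x: "x \<in> Xc Mp fp" "x \<in> Xc Mq fq" using that unfolding Xc_def by blast+
    then have "\<psi> x = x" using g1 unfolding good_map_def by blast
    then show ?thesis using g1 x unfolding good_map_def by metis
  qed
  have fdom: "dom f = dom fp \<union> dom fq" and fdom': "dom f = dom fq \<union> dom fp"
    unfolding f_def by auto
  have ffq: "\<forall>x\<in>dom fq. f x = fq x" unfolding f_def by auto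
  have ffp: "\<forall>x\<in>dom fp. f x = fp x"
  proof
    fix x assume x: "x \<in> dom fp"
    show "f x = fp x" using x agree unfolding f_def by (cases "x \<in> dom fq") (auto simp: map_add_def split: option.splits)
  qed
  note A1 = half_a[OF H p q g1 g2 fdom ffp ffq]
  note A2 = half_a[OF H q p g2 g1 fdom' ffq ffp]
  note B1 = half_b[OF H p q g1 g2 fdom ffp ffq]
  note B2 = half_b[OF H q p g2 g1 fdom' ffq ffp]
  note C1 = half_c[OF H p q g1 g2 fdom ffp ffq]
  note C2 = half_c[OF H q p g2 g1 fdom' ffq ffp]
  have un: "Mq \<union> Mp = Mp \<union> Mq" by blast
  have "Mp \<union> Mq \<in> P_Min E W"
    unfolding P_Min_def
  proof (intro CollectI conjI ballI impI)
    show "finite (Mp \<union> Mq)" using PP_D(1)[OF p] PP_D(1)[OF q] by blast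
    show "Mp \<union> Mq \<subseteq> SS E W" using PP_D(2)[OF p] PP_D(2)[OF q] by blast
    fix M N assume M: "M \<in> Mp \<union> Mq" and N: "N \<in> Mp \<union> Mq"
    { assume d: "delta E M = delta E N"
      show "isomorphic E M N" using M A1[OF _ N d] A2[OF _ N[folded un] d] by blast }
    { assume d: "delta E M \<subset> delta E N"
      show "\<exists>Na\<in>Mp \<union> Mq. delta E Na = delta E N \<and> set_in E M Na"
        using M B1[OF _ N d] B2[OF _ N[folded un] d] un by blast }
  qed
  moreover have "finite (dom f)" using PP_D(5)[OF p] PP_D(5)[OF q] fdom by simp
  moreover have "dom f \<subseteq> omega2 E" using PP_D(6)[OF p] PP_D(6)[OF q] fdom by simp
  moreover have "\<forall>M\<in>Mp \<union> Mq. \<forall>N\<in>Mp \<union> Mq. delta E M = delta E N \<longrightarrow>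
          (\<forall>\<alpha>\<in>dom f \<inter> M. phi E M N \<alpha> \<in> dom f \<and> f (phi E M N \<alpha>) = f \<alpha>)"
  proof (intro ballI impI)
    fix M N \<alpha> assume M: "M \<in> Mp \<union> Mq" and N: "N \<in> Mp \<union> Mq" and d: "delta E M = delta E N"
      and a: "\<alpha> \<in> dom f \<inter> M"
    show "phi E M N \<alpha> \<in> dom f \<and> f (phi E M N \<alpha>) = f \<alpha>"
      using M C1[OF _ N d] C2[OF _ N[folded un] d] a by blast
  qed
  ultimately have r: "(Mp \<union> Mq, f) \<in> PP E W" unfolding PP_def by blast
  have "PP_le (Mp \<union> Mq, f) (Mp, fp)" unfolding PP_le_def map_le_def using ffp by simp
  moreover have "PP_le (Mp \<union> Mq, f) (Mq, fq)" unfolding PP_le_def map_le_def using ffq by simp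
  ultimately show ?thesis unfolding compatible_def using r by blast
qed




definition typ' :: "('h \<Rightarrow> 'h \<Rightarrow> bool) \<Rightarrow> 'h set \<Rightarrow> 'h set set \<Rightarrow> ('h \<rightharpoonup> bool) \<Rightarrow>
   nat set \<times> (nat \<times> nat) set \<times> nat set set \<times> (nat \<times> bool) set \<times> (nat \<times> nat) set \<times> nat set" where
  "typ' E R Mp fp = (let X = Xc Mp fp; g = to_nat_on X; h = to_nat_on R in
     (g ` X, {(g x, g y) | x y. x \<in> X \<and> y \<in> X \<and> E x y}, (\<lambda>M. g ` M) ` Mp,
      {(g x, b) | x b. x \<in> X \<and> fp x = Some b}, {(g x, h x) | x. x \<in> X \<and> x \<in> R},
      g ` (X \<inter> omega1 E)))"

lemma mem2E: "(a, b) \<in> {(f x, f y) | x y. P x y} \<Longrightarrow> \<exists>x y. a = f x \<and> b = f y \<and> P x y"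
  unfolding mem_Collect_eq prod.inject by (elim exE conjE) (intro exI conjI, assumption+)

lemma mem1E: "(a, b) \<in> {(f x, c) | x c. P x c} \<Longrightarrow> \<exists>x. a = f x \<and> P x b"
  unfolding mem_Collect_eq prod.inject by (elim exE conjE) (intro exI conjI, simp_all)

lemma mem3E: "(a, c) \<in> {(f x, h x) | x. P x} \<Longrightarrow> \<exists>x. a = f x \<and> c = h x \<and> P x"
  unfolding mem_Collect_eq prod.inject by (elim exE conjE) (intro exI conjI, assumption+)

lemma typ_map:
  assumes cX: "countable (Xc Mp fp)" and cY: "countable (Xc Mq fq)" and cR: "countable R"
    and eq: "typ' E R Mp fp = typ' E R Mq fq"
  defines "\<psi> \<equiv> (\<lambda>x. inv_into (Xc Mq fq) (to_nat_on (Xc Mq fq)) (to_nat_on (Xc Mp fp) x))"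
  shows "(\<forall>x\<in>Xc Mp fp. \<psi> x \<in> Xc Mq fq) \<and> inj_on \<psi> (Xc Mp fp) \<and>
    (\<forall>x\<in>Xc Mp fp. \<forall>y\<in>Xc Mp fp. E x y \<longleftrightarrow> E (\<psi> x) (\<psi> y)) \<and>
    (\<forall>M\<in>Mp. \<psi> ` M \<in> Mq) \<and>
    (\<forall>x\<in>Xc Mp fp. fq (\<psi> x) = fp x) \<and>
    (\<forall>x\<in>Xc Mp fp. x \<in> R \<longleftrightarrow> \<psi> x \<in> R) \<and>
    (\<forall>x\<in>Xc Mp fp \<inter> R. \<psi> x = x) \<and>
    (\<forall>x\<in>Xc Mp fp. x \<in> omega1 E \<longleftrightarrow> \<psi> x \<in> omega1 E)"
proof -
  define X where "X = Xc Mp fp"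
  define Y where "Y = Xc Mq fq"
  define g where "g = to_nat_on X"
  define k where "k = to_nat_on Y"
  define h where "h = to_nat_on R"
  have ig: "inj_on g X" unfolding g_def X_def by (rule inj_on_to_nat_on[OF cX])
  have ik: "inj_on k Y" unfolding k_def Y_def by (rule inj_on_to_nat_on[OF cY])
  have ih: "inj_on h R" unfolding h_def by (rule inj_on_to_nat_on[OF cR])
  have \<psi>: "\<psi> = (\<lambda>x. inv_into Y k (g x))" unfolding \<psi>_def X_def Y_def g_def k_def ..
  have E1: "g ` X = k ` Y" and E2: "{(g x, g y) | x y. x \<in> X \<and> y \<in> X \<and> E x y} = {(k x, k y) | x y. x \<in> Y \<and> y \<in> Y \<and> E x y}"
    and E3: "(\<lambda>M. g ` M) ` Mp = (\<lambda>M. k ` M) ` Mq"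
    and E4: "{(g x, b) | x b. x \<in> X \<and> fp x = Some b} = {(k x, b) | x b. x \<in> Y \<and> fq x = Some b}"
    and E5: "{(g x, h x) | x. x \<in> X \<and> x \<in> R} = {(k x, h x) | x. x \<in> Y \<and> x \<in> R}"
    and E6: "g ` (X \<inter> omega1 E) = k ` (Y \<inter> omega1 E)"
    using eq unfolding typ'_def Let_def X_def[symmetric] Y_def[symmetric] g_def[symmetric] k_def[symmetric] h_def[symmetric]
    by simp_all
  have inY: "\<psi> x \<in> Y" and kpsi: "k (\<psi> x) = g x" if "x \<in> X" for x
  proof -
    have "g x \<in> k ` Y" using E1 that by blast
    then show "\<psi> x \<in> Y" "k (\<psi> x) = g x" unfolding \<psi> by (auto intro: inv_into_into f_inv_into_f)
  qed
  have uniq: "y = \<psi> x" if "x \<in> X" "y \<in> Y" "k y = g x" for x y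
    using ik inY[OF that(1)] kpsi[OF that(1)] that(2,3) unfolding inj_on_def by metis
  have uniqX: "x' = x" if "x \<in> X" "x' \<in> X" "g x' = g x" for x x'
    using ig that unfolding inj_on_def by metis
  have P1: "\<forall>x\<in>X. \<psi> x \<in> Y" using inY by blast
  have P2: "inj_on \<psi> X"
  proof (rule inj_onI)
    fix x y assume x: "x \<in> X" and y: "y \<in> X" and e: "\<psi> x = \<psi> y"
    have "g y = g x" using kpsi[OF x] kpsi[OF y] e by simp
    then show "x = y" using uniqX[OF x y] by simp
  qed
  have P3a: "E (\<psi> x) (\<psi> y)" if "x \<in> X" "y \<in> X" "E x y" for x y
  proof -
    have "(g x, g y) \<in> {(g x, g y) | x y. x \<in> X \<and> y \<in> X \<and> E x y}" using that by blast
    then have "(g x, g y) \<in> {(k x, k y) | x y. x \<in> Y \<and> y \<in> Y \<and> E x y}" unfolding E2 .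
    then obtain x' y' where xy': "g x = k x'" "g y = k y'" "x' \<in> Y" "y' \<in> Y" "E x' y'"
      using mem2E by blast
    have "x' = \<psi> x" by (rule uniq[OF that(1) xy'(3) xy'(1)[symmetric]])
    moreover have "y' = \<psi> y" by (rule uniq[OF that(2) xy'(4) xy'(2)[symmetric]])
    ultimately show ?thesis using xy'(5) by simp
  qed
  have P3b: "E x y" if "x \<in> X" "y \<in> X" "E (\<psi> x) (\<psi> y)" for x y
  proof -
    have "\<psi> x \<in> Y" "\<psi> y \<in> Y" using inY that(1,2) by auto
    then have "(k (\<psi> x), k (\<psi> y)) \<in> {(k x, k y) | x y. x \<in> Y \<and> y \<in> Y \<and> E x y}"
      using that(3) by blast
    then have "(g x, g y) \<in> {(k x, k y) | x y. x \<in> Y \<and> y \<in> Y \<and> E x y}"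
      using kpsi that by simp
    then have "(g x, g y) \<in> {(g x, g y) | x y. x \<in> X \<and> y \<in> X \<and> E x y}" unfolding E2 .
    then obtain x' y' where xy': "g x = g x'" "g y = g y'" "x' \<in> X" "y' \<in> X" "E x' y'"
      using mem2E by blast
    have "x' = x" by (rule uniqX[OF that(1) xy'(3) xy'(1)[symmetric]])
    moreover have "y' = y" by (rule uniqX[OF that(2) xy'(4) xy'(2)[symmetric]])
    ultimately show ?thesis using xy'(5) by simp
  qed
  have P4: "\<psi> ` M \<in> Mq" if M: "M \<in> Mp" for M
  proof -
    have "g ` M \<in> (\<lambda>M. g ` M) ` Mp" using M by blast
    then have "g ` M \<in> (\<lambda>M. k ` M) ` Mq" unfolding E3 .
    then obtain M' where M': "M' \<in> Mq" "g ` M = k ` M'" by blast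
    have M'Y: "M' \<subseteq> Y" using M'(1) unfolding Y_def Xc_def by blast
    have "\<psi> ` M = inv_into Y k ` (g ` M)" unfolding \<psi> by auto
    also have "\<dots> = inv_into Y k ` (k ` M')" using M'(2) by simp
    also have "\<dots> = M'" using ik M'Y by (rule inv_into_image_cancel)
    finally show ?thesis using M'(1) by simp
  qed
  have P5: "fq (\<psi> x) = fp x" if x: "x \<in> X" for x
  proof (cases "fp x")
    case None
    show ?thesis
    proof (rule ccontr)
      assume "fq (\<psi> x) \<noteq> fp x"
      then obtain b where b: "fq (\<psi> x) = Some b" using None by auto
      have "(k (\<psi> x), b) \<in> {(k x, b) | x b. x \<in> Y \<and> fq x = Some b}" using inY[OF x] b by blast
      then have "(g x, b) \<in> {(k x, b) | x b. x \<in> Y \<and> fq x = Some b}" using kpsi[OF x] by simp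
      then have "(g x, b) \<in> {(g x, b) | x b. x \<in> X \<and> fp x = Some b}" unfolding E4 .
      then obtain x' where x': "g x = g x'" "x' \<in> X" "fp x' = Some b" using mem1E by blast
      have "x' = x" by (rule uniqX[OF x x'(2) x'(1)[symmetric]])
      then show False using x'(3) None by simp
    qed
  next
    case (Some b)
    then have "(g x, b) \<in> {(g x, b) | x b. x \<in> X \<and> fp x = Some b}" using x by blast
    then have "(g x, b) \<in> {(k x, b) | x b. x \<in> Y \<and> fq x = Some b}" unfolding E4 .
    then obtain y where y: "g x = k y" "y \<in> Y" "fq y = Some b" using mem1E by blast
    have "y = \<psi> x" by (rule uniq[OF x y(2) y(1)[symmetric]])
    then show ?thesis using y(3) Some by simp
  qed
  have P6a: "\<psi> x \<in> R \<and> \<psi> x = x" if x: "x \<in> X" and xR: "x \<in> R" for x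
  proof -
    have "(g x, h x) \<in> {(g x, h x) | x. x \<in> X \<and> x \<in> R}" using x xR by blast
    then have "(g x, h x) \<in> {(k x, h x) | x. x \<in> Y \<and> x \<in> R}" unfolding E5 .
    then obtain y where y: "g x = k y" "h x = h y" "y \<in> Y" "y \<in> R" using mem3E by blast
    have "y = x" using ih xR y(2,4) unfolding inj_on_def by metis
    moreover have "y = \<psi> x" by (rule uniq[OF x y(3) y(1)[symmetric]])
    ultimately show ?thesis using xR by simp
  qed
  have P6b: "x \<in> R" if x: "x \<in> X" and pR: "\<psi> x \<in> R" for x
  proof -
    have "(k (\<psi> x), h (\<psi> x)) \<in> {(k x, h x) | x. x \<in> Y \<and> x \<in> R}" using inY[OF x] pR by blast
    then have "(g x, h (\<psi> x)) \<in> {(k x, h x) | x. x \<in> Y \<and> x \<in> R}" using kpsi[OF x] by simp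
    then have "(g x, h (\<psi> x)) \<in> {(g x, h x) | x. x \<in> X \<and> x \<in> R}" unfolding E5 .
    then obtain x' where x': "g x = g x'" "x' \<in> X" "x' \<in> R" using mem3E by blast
    have "x' = x" by (rule uniqX[OF x x'(2) x'(1)[symmetric]])
    then show ?thesis using x'(3) by simp
  qed
  have P7a: "\<psi> x \<in> omega1 E" if x: "x \<in> X" and o: "x \<in> omega1 E" for x
  proof -
    have "g x \<in> g ` (X \<inter> omega1 E)" using x o by blast
    then have "g x \<in> k ` (Y \<inter> omega1 E)" unfolding E6 .
    then obtain y where y: "y \<in> Y" "y \<in> omega1 E" "g x = k y" by blast
    have "y = \<psi> x" by (rule uniq[OF x y(1) y(3)[symmetric]])
    then show ?thesis using y(2) by simp
  qed
  have P7b: "x \<in> omega1 E" if x: "x \<in> X" and o: "\<psi> x \<in> omega1 E" for x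
  proof -
    have "k (\<psi> x) \<in> k ` (Y \<inter> omega1 E)" using inY[OF x] o by blast
    then have "g x \<in> g ` (X \<inter> omega1 E)" unfolding E6 kpsi[OF x] .
    then obtain x' where x': "x' \<in> X" "x' \<in> omega1 E" "g x = g x'" by blast
    have "x' = x" by (rule uniqX[OF x x'(1) x'(3)[symmetric]])
    then show ?thesis using x'(2) by simp
  qed
  have "\<forall>x\<in>X. \<forall>y\<in>X. E x y \<longleftrightarrow> E (\<psi> x) (\<psi> y)" using P3a P3b by blast
  moreover have "\<forall>M\<in>Mp. \<psi> ` M \<in> Mq" using P4 by blast
  moreover have "\<forall>x\<in>X. fq (\<psi> x) = fp x" using P5 by blast
  moreover have "\<forall>x\<in>X. x \<in> R \<longleftrightarrow> \<psi> x \<in> R" using P6a P6b by blast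
  moreover have "\<forall>x\<in>X \<inter> R. \<psi> x = x" using P6a by blast
  moreover have "\<forall>x\<in>X. x \<in> omega1 E \<longleftrightarrow> \<psi> x \<in> omega1 E" using P7a P7b by blast
  ultimately show ?thesis unfolding X_def[symmetric] Y_def[symmetric] using P1 P2 by blast
qed



lemma graph_inj: "Map.graph f = Map.graph g \<Longrightarrow> f = g"
proof
  fix x assume G: "Map.graph f = Map.graph g"
  show "f x = g x"
  proof (cases "f x")
    case None
    show ?thesis
    proof (cases "g x")
      case (Some b)
      then have "(x, b) \<in> Map.graph f" using G in_graphI by metis
      then show ?thesis using None in_graphD by fastforce
    qed (use None in simp)
  next
    case (Some b)
    then have "(x, b) \<in> Map.graph g" using G in_graphI by metis
    then show ?thesis using Some in_graphD by fastforce
  qed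
qed

lemma graph_sub: "Map.graph f \<subseteq> dom f \<times> UNIV"
  unfolding graph_def by auto

lemma PP_countable:
  assumes "(Mp, fp) \<in> PP E W"
  shows "countable (Xc Mp fp)"
proof -
  have "finite Mp" "Mp \<subseteq> SS E W" "finite (dom fp)" using PP_D[OF assms] by auto
  then have "countable (\<Union>Mp)" unfolding SS_def by (intro countable_UN[of _ id, simplified]) (auto simp: countable_finite)
  then show ?thesis unfolding Xc_def using \<open>finite (dom fp)\<close> by (simp add: countable_finite)
qed

lemma typ_bound:
  assumes CH0: "|UNIV :: nat set set| =o k1"
    and fin: "\<And>p. p \<in> A \<Longrightarrow> finite (fst p)"
  shows "|(\<lambda>p. typ' E R (fst p) (snd p)) ` A| \<le>o k1"
proof -
  let ?S = "(UNIV :: nat set set) \<times> (UNIV :: (nat \<times> nat) set set) \<times> {T :: nat set set. countable T} \<times>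
     (UNIV :: (nat \<times> bool) set set) \<times> (UNIV :: (nat \<times> nat) set set) \<times> (UNIV :: nat set set)"
  have sub: "(\<lambda>p. typ' E R (fst p) (snd p)) ` A \<subseteq> ?S"
  proof
    fix t assume "t \<in> (\<lambda>p. typ' E R (fst p) (snd p)) ` A"
    then obtain p where p: "p \<in> A" "t = typ' E R (fst p) (snd p)" by blast
    have "finite ((\<lambda>M. to_nat_on (Xc (fst p) (snd p)) ` M) ` fst p)" using fin[OF p(1)] by simp
    then show "t \<in> ?S" unfolding p(2) typ'_def Let_def by (simp add: countable_finite)
  qed
  have c1: "|UNIV :: nat set set| \<le>o k1" by (rule pow_countable_k1[OF CH0])
  have c2: "|UNIV :: (nat \<times> nat) set set| \<le>o k1" by (rule pow_countable_k1[OF CH0])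
  have c3: "|{T :: nat set set. countable T}| \<le>o k1"
    using countable_sets_le CH0 ordLeq_ordIso_trans by blast
  have c4: "|UNIV :: (nat \<times> bool) set set| \<le>o k1" by (rule pow_countable_k1[OF CH0])
  have "|?S| \<le>o k1"
    by (intro Times_k1 c1 c2 c3 c4)
  then show ?thesis using sub sub_k1 by blast
qed
lemma inside_bound:
  assumes CH0: "|UNIV :: nat set set| =o k1" and Zk: "|Z| \<le>o k1"
    and B: "\<And>p. p \<in> B \<Longrightarrow> finite (fst p) \<and> (\<forall>M\<in>fst p. countable M) \<and> finite (dom (snd p)) \<and> Xc (fst p) (snd p) \<subseteq> Z"
  shows "|B| \<le>o k1"
proof -
  define S1 where "S1 = {Mp. countable Mp \<and> Mp \<subseteq> {R. countable R \<and> R \<subseteq> Z}}"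
  define S2 where "S2 = {G. countable G \<and> G \<subseteq> Z \<times> (UNIV :: bool set)}"
  have "|{R. countable R \<and> R \<subseteq> Z}| \<le>o k1" by (rule CS[OF CH0 Zk])
  then have s1: "|S1| \<le>o k1" unfolding S1_def by (rule CS[OF CH0])
  have "|Z \<times> (UNIV :: bool set)| \<le>o k1" by (rule Times_k1[OF Zk countable_le_k1]) simp
  then have s2: "|S2| \<le>o k1" unfolding S2_def by (rule CS[OF CH0])
  have inj: "inj_on (\<lambda>p. (fst p, Map.graph (snd p))) B"
  proof (rule inj_onI)
    fix p q assume "(fst p, Map.graph (snd p)) = (fst q, Map.graph (snd q))"
    then have "fst p = fst q" "snd p = snd q" using graph_inj by auto
    then show "p = q" by (rule prod_eqI)
  qed
  have img: "(\<lambda>p. (fst p, Map.graph (snd p))) ` B \<subseteq> S1 \<times> S2"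
  proof
    fix t assume "t \<in> (\<lambda>p. (fst p, Map.graph (snd p))) ` B"
    then obtain p where p: "p \<in> B" "t = (fst p, Map.graph (snd p))" by blast
    have Bp: "finite (fst p)" "\<forall>M\<in>fst p. countable M" "finite (dom (snd p))" "Xc (fst p) (snd p) \<subseteq> Z"
      using B[OF p(1)] by auto
    have "fst p \<in> S1" unfolding S1_def using Bp(1,2,4) unfolding Xc_def by (auto simp: countable_finite)
    moreover have "finite (Map.graph (snd p))"
      using finite_subset[OF graph_sub] Bp(3) by auto
    moreover have "Map.graph (snd p) \<subseteq> Z \<times> (UNIV :: bool set)"
      using graph_sub[of "snd p"] Bp(4) unfolding Xc_def by blast
    ultimately show "t \<in> S1 \<times> S2" unfolding S2_def p(2) by (auto simp: countable_finite)
  qed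
  have "|B| \<le>o |S1 \<times> S2|" by (rule inj_le[OF inj img])
  moreover have "|S1 \<times> S2| \<le>o k1" by (rule Times_k1[OF s1 s2])
  ultimately show ?thesis by (rule ordLeq_transitive)
qed



theorem lemma3p7:
  fixes E :: "'h \<Rightarrow> 'h \<Rightarrow> bool" and W :: "('h \<times> 'h) set"
  assumes "is_H_omega2 E"
    and "well_order W"
    and "CH"
  shows "aleph2_cc (PP E W) PP_le"
proof -
  note H = assms(1)
  have CH0: "|UNIV :: nat set set| =o k1" using assms(3) unfolding CH_def .
  show ?thesis unfolding aleph2_cc_def at_most_aleph1_def
  proof (intro allI impI)
    fix A assume anti: "antichain (PP E W) PP_le A"
    have AP: "A \<subseteq> PP E W" using anti unfolding antichain_def by blast
    have inPP: "(fst p, snd p) \<in> PP E W" if "p \<in> A" for p using AP that by auto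
    have cX: "countable (Xc (fst p) (snd p))" if "p \<in> A" for p by (rule PP_countable[OF inPP[OF that]])
    have finA: "finite (fst p)" if "p \<in> A" for p using PP_D(1)[OF inPP[OF that]] .
    show "|A| \<le>o k1"
    proof (rule ccontr)
      assume big: "\<not> |A| \<le>o k1"
      define tp where "tp R p = typ' E R (fst p) (snd p)" for R p
      define w where "w R c = (SOME p. p \<in> A \<and> tp R p = c)" for R c
      define F where "F R = (\<Union>c\<in>tp R ` A. Xc (fst (w R c)) (snd (w R c)))" for R
      have wA: "w R c \<in> A \<and> tp R (w R c) = c" if cA: "c \<in> tp R ` A" for R c
      proof -
        obtain p where "p \<in> A" "tp R p = c" using cA by blast
        then have "p \<in> A \<and> tp R p = c" by blast
        then show ?thesis unfolding w_def by (rule someI)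
      qed
      have tb: "|tp R ` A| \<le>o k1" for R
        unfolding tp_def using typ_bound[OF CH0 finA] by blast
      have FR: "|F R| \<le>o k1" for R
        unfolding F_def
      proof (rule UN_k1[OF tb])
        fix c assume "c \<in> tp R ` A"
        then have "w R c \<in> A" using wA by blast
        then show "|Xc (fst (w R c)) (snd (w R c))| \<le>o k1" using cX countable_le_k1 by blast
      qed
      obtain Z where Z: "omega1 E \<subseteq> Z" "|Z| \<le>o k1" "\<forall>R. countable R \<longrightarrow> R \<subseteq> Z \<longrightarrow> F R \<subseteq> Z"
        using closure_k1[where F=F, OF CH0 omega1_le[OF H] FR] by (elim exE conjE) (rule that)
      have "\<exists>j\<in>A. \<not> Xc (fst j) (snd j) \<subseteq> Z"
      proof (rule ccontr)
        assume "\<not> ?thesis"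
        then have sub: "\<And>p. p \<in> A \<Longrightarrow> Xc (fst p) (snd p) \<subseteq> Z" by auto
        have "|A| \<le>o k1"
        proof (rule inside_bound[OF CH0 Z(2)])
          fix p assume p: "p \<in> A"
          have s1: "fst p \<subseteq> SS E W" using PP_D(2)[OF inPP[OF p]] .
          have s2: "finite (dom (snd p))" using PP_D(5)[OF inPP[OF p]] .
          have s3: "\<forall>M\<in>fst p. countable M"
          proof
            fix M assume "M \<in> fst p"
            then have "M \<in> SS E W" using s1 by (rule subsetD[rotated])
            then show "countable M" unfolding SS_def by simp
          qed
          show "finite (fst p) \<and> (\<forall>M\<in>fst p. countable M) \<and> finite (dom (snd p)) \<and> Xc (fst p) (snd p) \<subseteq> Z"
            using finA[OF p] sub[OF p] s2 s3 by (intro conjI)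
        qed
        then show False using big by blast
      qed
      then obtain j where j: "j \<in> A" "\<not> Xc (fst j) (snd j) \<subseteq> Z" by (elim bexE) (rule that)
      define R where "R = Xc (fst j) (snd j) \<inter> Z"
      have cR: "countable R" unfolding R_def using cX[OF j(1)] by simp
      define i where "i = w R (tp R j)"
      have i: "i \<in> A" "tp R i = tp R j" using wA[OF imageI[OF j(1)]] unfolding i_def by auto
      have tj: "tp R j \<in> tp R ` A" using j(1) by (rule imageI)
      have "Xc (fst i) (snd i) \<subseteq> F R" unfolding F_def i_def by (rule UN_upper[OF tj])
      moreover have "F R \<subseteq> Z" by (rule Z(3)[rule_format, OF cR]) (simp add: R_def)
      ultimately have iZ: "Xc (fst i) (snd i) \<subseteq> Z" by (rule subset_trans)
      have ij: "i \<noteq> j"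
      proof
        assume "i = j"
        then show False using iZ j(2) by simp
      qed
      define Xi where "Xi = Xc (fst i) (snd i)"
      define Xj where "Xj = Xc (fst j) (snd j)"
      define \<psi> where "\<psi> = (\<lambda>x. inv_into Xj (to_nat_on Xj) (to_nat_on Xi x))"
      define \<chi> where "\<chi> = (\<lambda>x. inv_into Xi (to_nat_on Xi) (to_nat_on Xj x))"
      have T1: "(\<forall>x\<in>Xi. \<psi> x \<in> Xj) \<and> inj_on \<psi> Xi \<and>
        (\<forall>x\<in>Xi. \<forall>y\<in>Xi. E x y \<longleftrightarrow> E (\<psi> x) (\<psi> y)) \<and> (\<forall>M\<in>fst i. \<psi> ` M \<in> fst j) \<and>
        (\<forall>x\<in>Xi. snd j (\<psi> x) = snd i x) \<and> (\<forall>x\<in>Xi. x \<in> R \<longleftrightarrow> \<psi> x \<in> R) \<and>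
        (\<forall>x\<in>Xi \<inter> R. \<psi> x = x) \<and> (\<forall>x\<in>Xi. x \<in> omega1 E \<longleftrightarrow> \<psi> x \<in> omega1 E)"
        unfolding \<psi>_def Xi_def Xj_def
        by (rule typ_map[OF cX[OF i(1)] cX[OF j(1)] cR i(2)[unfolded tp_def]])
      have T2: "(\<forall>x\<in>Xj. \<chi> x \<in> Xi) \<and> inj_on \<chi> Xj \<and>
        (\<forall>x\<in>Xj. \<forall>y\<in>Xj. E x y \<longleftrightarrow> E (\<chi> x) (\<chi> y)) \<and> (\<forall>M\<in>fst j. \<chi> ` M \<in> fst i) \<and>
        (\<forall>x\<in>Xj. snd i (\<chi> x) = snd j x) \<and> (\<forall>x\<in>Xj. x \<in> R \<longleftrightarrow> \<chi> x \<in> R) \<and>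
        (\<forall>x\<in>Xj \<inter> R. \<chi> x = x) \<and> (\<forall>x\<in>Xj. x \<in> omega1 E \<longleftrightarrow> \<chi> x \<in> omega1 E)"
        unfolding \<chi>_def Xi_def Xj_def
        by (rule typ_map[OF cX[OF j(1)] cX[OF i(1)] cR i(2)[unfolded tp_def, symmetric]])
      have RXj: "R = Xj \<inter> Z" unfolding R_def Xj_def ..
      have XiZ: "Xi \<subseteq> Z" using iZ unfolding Xi_def .
      note a1 = T1[THEN conjunct1]
      note a2 = T1[THEN conjunct2, THEN conjunct1]
      note a3 = T1[THEN conjunct2, THEN conjunct2, THEN conjunct1]
      note a4 = T1[THEN conjunct2, THEN conjunct2, THEN conjunct2, THEN conjunct1]
      note a5 = T1[THEN conjunct2, THEN conjunct2, THEN conjunct2, THEN conjunct2, THEN conjunct1]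
      note a6 = T1[THEN conjunct2, THEN conjunct2, THEN conjunct2, THEN conjunct2, THEN conjunct2, THEN conjunct1]
      note a7 = T1[THEN conjunct2, THEN conjunct2, THEN conjunct2, THEN conjunct2, THEN conjunct2, THEN conjunct2, THEN conjunct1]
      note a8 = T1[THEN conjunct2, THEN conjunct2, THEN conjunct2, THEN conjunct2, THEN conjunct2, THEN conjunct2, THEN conjunct2]
      note b1 = T2[THEN conjunct1]
      note b2 = T2[THEN conjunct2, THEN conjunct1]
      note b3 = T2[THEN conjunct2, THEN conjunct2, THEN conjunct1]
      note b4 = T2[THEN conjunct2, THEN conjunct2, THEN conjunct2, THEN conjunct1]
      note b5 = T2[THEN conjunct2, THEN conjunct2, THEN conjunct2, THEN conjunct2, THEN conjunct1]
      note b6 = T2[THEN conjunct2, THEN conjunct2, THEN conjunct2, THEN conjunct2, THEN conjunct2, THEN conjunct1]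
      note b7 = T2[THEN conjunct2, THEN conjunct2, THEN conjunct2, THEN conjunct2, THEN conjunct2, THEN conjunct2, THEN conjunct1]
      note b8 = T2[THEN conjunct2, THEN conjunct2, THEN conjunct2, THEN conjunct2, THEN conjunct2, THEN conjunct2, THEN conjunct2]
      have a9: "\<forall>x\<in>Xi \<inter> Xj. \<psi> x = x"
      proof
        fix x assume "x \<in> Xi \<inter> Xj"
        then have "x \<in> Xi \<inter> R" using XiZ RXj by blast
        then show "\<psi> x = x" using a7 by blast
      qed
      have a10: "\<forall>x\<in>Xi \<inter> omega1 E. \<psi> x = x"
      proof
        fix x assume x: "x \<in> Xi \<inter> omega1 E"
        then have "\<psi> x \<in> Xj" "\<psi> x \<in> omega1 E" using a1 a8 by blast+
        then have "\<psi> x \<in> R" using Z(1) RXj by blast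
        then have "x \<in> Xi \<inter> R" using a6 x by blast
        then show "\<psi> x = x" using a7 by blast
      qed
      have b9: "\<forall>x\<in>Xj \<inter> Xi. \<chi> x = x"
      proof
        fix x assume "x \<in> Xj \<inter> Xi"
        then have "x \<in> Xj \<inter> R" using XiZ RXj by blast
        then show "\<chi> x = x" using b7 by blast
      qed
      have b10: "\<forall>x\<in>Xj \<inter> omega1 E. \<chi> x = x"
      proof
        fix x assume x: "x \<in> Xj \<inter> omega1 E"
        then have "x \<in> Xj \<inter> R" using Z(1) RXj by blast
        then show "\<chi> x = x" using b7 by blast
      qed
      have g1: "good_map E (fst i) (snd i) (fst j) (snd j) \<psi>"
        unfolding good_map_def Xi_def[symmetric] Xj_def[symmetric]
        using a1 a2 a3 a4 a5 a8 a9 a10 by (intro conjI)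
      have g2: "good_map E (fst j) (snd j) (fst i) (snd i) \<chi>"
        unfolding good_map_def Xi_def[symmetric] Xj_def[symmetric]
        using b1 b2 b3 b4 b5 b8 b9 b10 by (intro conjI)
      have "compatible (PP E W) PP_le (fst i, snd i) (fst j, snd j)"
        by (rule amalg[OF H inPP[OF i(1)] inPP[OF j(1)] g1 g2])
      then have "compatible (PP E W) PP_le i j" by simp
      then show False using anti i(1) j(1) ij unfolding antichain_def by blast
    qed
  qed
qed

end
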